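(* Under the sampling rule of F-TaS (described in the context), run indefinitely on the $K$-armed unit-variance Gaussian bandit with $\theta\in\Theta$, with either pre-specified or $\theta$-dependent fairness rates, every arm is sampled infinitely often: $\mathbb{P}_\theta(\lim_{t\to\infty}N_a(t)=\infty)=1$ for all $a\in[K]$.
   Context: Bandit model: arms $[K]$, unknown $\theta\in\Theta:=\{\theta\in\mathbb{R}^K:\arg\max_a\theta_a\text{ unique}\}$, reward $r_t\sim\mathcal N(\theta_{a_t},1)$. $N_a(t)=\sum_{s\le t}\mathbf1\{a_s=a\}$. Fairness rates: pre-specified $p\in[0,1]^K$ with $p_{\rm sum}=\sum_ap_a\le1$, or continuous $p:\mathbb{R}^K\to[0,1]^K$ with sum at most $1$. $\Sigma_p=\{w\in[0,1]^K:w\ge p,\sum_aw_a=1\}$; for a parameter $\lambda$ with unique best arm $a^\star_\lambda$ and gaps $\Delta_a(\lambda)$, $w^\star_p(\lambda)\in\arg\min_{w\in\Sigma_p}\max_{a\ne a^\star_\lambda}(w_a^{-1}+w_{a^\star_\lambda}^{-1})/\Delta_a(\lambda)^2$ (with $p=p(\lambda)$ in the $\theta$-dependent case). F-TaS sampling rule: $\epsilon_t=1/(2\sqrt t)$; pre-specified case with $K_0=|\{a:p_a=0\}|$: if $K_0=0$, $\pi_{c,a}=p_a+(1-p_{\rm sum})/K$; otherwise $\pi_{c,a}=p_a$ if $p_a>0$ and $(1-p_{\rm sum})/K_0$ if $p_a=0$; $\theta$-dependent case: $\pi_{c,a}=1/K$. At round $t$, $a_t\sim\pi(t)=(1-\epsilon_t)w^\star_p(\hat\theta)+\epsilon_t\pi_c$,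 $\hat\theta$ the current empirical means (fixed convention when undefined). *)

theory Defs
  imports "HOL-Probability.Probability"
begin

text \<open>Arms are the elements of a finite type 'k, so K = CARD('k); parameters are
  vectors in real^'k. Rounds are indexed t = 1, 2, ...\<close>

definition Theta :: "(real^'k::finite) set" where
  "Theta = {th. \<exists>!a. \<forall>b. th$b \<le> th$a}"

definition best_arm :: "real^'k::finite \<Rightarrow> 'k" where
  "best_arm th = (THE a. \<forall>b. th$b \<le> th$a)"

definition gap :: "real^'k::finite \<Rightarrow> 'k \<Rightarrow> real" where
  "gap th a = th $ best_arm th - th $ a"

definition valid_rates :: "real^'k::finite \<Rightarrow> bool" where
  "valid_rates p \<longleftrightarrow> (\<forall>a. 0 \<le> p$a \<and> p$a \<le> 1) \<and> (\<Sum>a\<in>UNIV. p$a) \<le> 1"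

definition Sigma_p :: "real^'k::finite \<Rightarrow> (real^'k) set" where
  "Sigma_p p = {w. (\<forall>a. p$a \<le> w$a \<and> w$a \<le> 1 \<and> 0 \<le> w$a) \<and> (\<Sum>a\<in>UNIV. w$a) = 1}"

definition char_time :: "real^'k::finite \<Rightarrow> real^'k \<Rightarrow> ereal" where
  "char_time lam w = (SUP a\<in>{a. a \<noteq> best_arm lam}.
     (if w $ a = 0 \<or> w $ best_arm lam = 0 then \<infinity>
      else ereal ((1 / w$a + 1 / w$(best_arm lam)) / (gap lam a)^2)))"

definition is_opt_alloc :: "real^'k::finite \<Rightarrow> real^'k \<Rightarrow> real^'k \<Rightarrow> bool" where
  "is_opt_alloc p lam w \<longleftrightarrow> w \<in> Sigma_p p \<and> (\<forall>v\<in>Sigma_p p. char_time lam w \<le> char_time lam v)"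

definition pic_pre :: "real^'k::finite \<Rightarrow> real^'k" where
  "pic_pre p = (let psum = (\<Sum>a\<in>UNIV. p$a); K0 = card {a. p$a = 0} in
     (\<chi> a. if K0 = 0 then p$a + (1 - psum) / real CARD('k)
           else if p$a > 0 then p$a else (1 - psum) / real K0))"

definition eps :: "nat \<Rightarrow> real" where
  "eps t = 1 / (2 * sqrt (real t))"

definition Npulls :: "(nat \<Rightarrow> 'w \<Rightarrow> 'k) \<Rightarrow> nat \<Rightarrow> 'w \<Rightarrow> 'k \<Rightarrow> nat" where
  "Npulls A t w a = card {s\<in>{1..t}. A s w = a}"

text \<open>Empirical means after t rounds; th0 is the fixed convention for unsampled arms.\<close>
definition emp_mean :: "real^'k::finite \<Rightarrow> (nat \<Rightarrow> 'w \<Rightarrow> 'k) \<Rightarrow> (nat \<Rightarrow> 'w \<Rightarrow> real)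
    \<Rightarrow> nat \<Rightarrow> 'w \<Rightarrow> real^'k" where
  "emp_mean th0 A R t w = (\<chi> a. if Npulls A t w a = 0 then th0$a
      else (\<Sum>s\<in>{s\<in>{1..t}. A s w = a}. R s w) / real (Npulls A t w a))"

definition ftas_pi :: "(real^'k::finite \<Rightarrow> real^'k) \<Rightarrow> real^'k \<Rightarrow> real^'k
    \<Rightarrow> (nat \<Rightarrow> 'w \<Rightarrow> 'k) \<Rightarrow> (nat \<Rightarrow> 'w \<Rightarrow> real) \<Rightarrow> nat \<Rightarrow> 'w \<Rightarrow> real^'k" where
  "ftas_pi ws pic th0 A R t w =
     (1 - eps t) *\<^sub>R ws (emp_mean th0 A R (t - 1) w) + eps t *\<^sub>R pic"

definition hist_gens :: "'w measure \<Rightarrow> (nat \<Rightarrow> 'w \<Rightarrow> 'k) \<Rightarrow> (nat \<Rightarrow> 'w \<Rightarrow> real) \<Rightarrow> nat \<Rightarrow> 'w set set" where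
  "hist_gens M A R t =
     (\<Union>s\<in>{1..t}. {A s -` {a} \<inter> space M | a. True} \<union> {R s -` B \<inter> space M | B. B \<in> sets borel})"

definition hist :: "'w measure \<Rightarrow> (nat \<Rightarrow> 'w \<Rightarrow> 'k) \<Rightarrow> (nat \<Rightarrow> 'w \<Rightarrow> real) \<Rightarrow> nat \<Rightarrow> 'w measure" where
  "hist M A R t = sigma (space M) (hist_gens M A R t)"

definition hist_act :: "'w measure \<Rightarrow> (nat \<Rightarrow> 'w \<Rightarrow> 'k) \<Rightarrow> (nat \<Rightarrow> 'w \<Rightarrow> real) \<Rightarrow> nat \<Rightarrow> 'w measure" where
  "hist_act M A R t = sigma (space M)
     (hist_gens M A R (t - 1) \<union> {A t -` {a} \<inter> space M | a. True})"

end

theory Submission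
  imports Defs "HOL-Real_Asymp.Real_Asymp"
begin

lemma hist_gens_pow: "hist_gens M A R t \<subseteq> Pow (space M)"
  unfolding hist_gens_def
  by (intro UN_least Un_least) (auto simp only: Pow_iff Int_lower2 mem_Collect_eq subset_iff)

lemma space_hist: "space (hist M A R t) = space M"
  unfolding hist_def by (rule space_measure_of[OF hist_gens_pow])

lemma sets_hist: "sets (hist M A R t) = sigma_sets (space M) (hist_gens M A R t)"
  unfolding hist_def by (rule sets_measure_of[OF hist_gens_pow])

lemma hist_gen_in:
  assumes "1 \<le> s" "s \<le> t"
  shows "A s -` {x} \<inter> space M \<in> sets (hist M A R t)"
proof -
  have 1: "A s -` {x} \<inter> space M \<in> {A s -` {a} \<inter> space M | a. True}" by blast
  have "A s -` {x} \<inter> space M \<in> hist_gens M A R t"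
    unfolding hist_gens_def
    by (rule UN_I[of s]) (use assms in simp, rule UnI1, rule 1)
  then show ?thesis unfolding sets_hist by (rule sigma_sets.Basic)
qed

lemma hist_subalg:
  assumes meas_A: "\<And>t. A t \<in> M \<rightarrow>\<^sub>M count_space UNIV"
    and meas_R: "\<And>t. R t \<in> borel_measurable M"
  shows "subalgebra M (hist M A R t)"
proof -
  have g: "hist_gens M A R t \<subseteq> sets M"
    unfolding hist_gens_def
  proof (intro UN_least Un_least subsetI)
    fix s X assume "X \<in> {A s -` {a} \<inter> space M |a. True}"
    then obtain b where "X = A s -` {b} \<inter> space M" by blast
    then show "X \<in> sets M" using measurable_sets[OF meas_A[of s], of "{b}"] by simp
  next
    fix s X assume "X \<in> {R s -` B \<inter> space M |B. B \<in> sets borel}"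
    then obtain B where "X = R s -` B \<inter> space M" "B \<in> sets borel" by blast
    then show "X \<in> sets M" using measurable_sets[OF meas_R[of s]] by simp
  qed
  have "sets (hist M A R t) \<subseteq> sets M"
    unfolding sets_hist by (rule sets.sigma_sets_subset[OF g])
  then show ?thesis unfolding subalgebra_def space_hist by blast
qed
lemma eps_bounds: assumes "1 \<le> t" shows "0 \<le> eps t" "eps t \<le> 1"
proof -
  have "1 \<le> sqrt (real t)" using assms by simp
  then have "1 \<le> 2 * sqrt (real t)" by linarith
  then show "0 \<le> eps t" "eps t \<le> 1" unfolding eps_def by (auto simp: divide_le_eq)
qed

lemma eps_lb: assumes "1 \<le> t" "t \<le> m" shows "1 / (2 * sqrt (real m)) \<le> eps t"
proof -
  have "0 < sqrt (real t)" "sqrt (real t) \<le> sqrt (real m)" using assms by auto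
  then show ?thesis unfolding eps_def by (simp add: frac_le)
qed

lemma pic_pos:
  fixes pic :: "real^'k::finite" and pf :: "real^'k \<Rightarrow> real^'k"
  assumes rates: "(\<exists>p. valid_rates p \<and> ((\<Sum>a\<in>UNIV. p$a) < 1 \<or> (\<forall>a. p$a > 0))
                   \<and> pf = (\<lambda>_. p) \<and> pic = pic_pre p)
              \<or> ((\<forall>lam. valid_rates (pf lam)) \<and> continuous_on UNIV pf
                   \<and> pic = (\<chi> a. 1 / real CARD('k)))"
  shows "pic $ a > 0"
  using rates
proof
  assume "\<exists>p. valid_rates p \<and> ((\<Sum>a\<in>UNIV. p$a) < 1 \<or> (\<forall>a. p$a > 0))
                   \<and> pf = (\<lambda>_. p) \<and> pic = pic_pre p"
  then obtain p where v: "valid_rates p" and d: "(\<Sum>a\<in>UNIV. p$a) < 1 \<or> (\<forall>a. p$a > 0)"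
    and pic: "pic = pic_pre p" by blast
  have nn: "\<And>b. 0 \<le> p$b" and s1: "(\<Sum>a\<in>UNIV. p$a) \<le> 1" using v unfolding valid_rates_def by auto
  show ?thesis
  proof (cases "card {a. p$a = 0} = 0")
    case True
    then have "{a. p$a = 0} = {}" by simp
    then have "p$a \<noteq> 0" by blast
    then have "p$a > 0" using nn[of a] by linarith
    moreover have "(1 - (\<Sum>a\<in>UNIV. p$a)) / real CARD('k) \<ge> 0" using s1 by simp
    ultimately show ?thesis using True unfolding pic pic_pre_def Let_def by simp
  next
    case False
    then have ne: "{a. p$a = 0} \<noteq> {}" by auto
    then obtain b where "p$b = 0" by blast
    then have lt: "(\<Sum>a\<in>UNIV. p$a) < 1" using d by (metis less_irrefl)
    have "card {a. p$a = 0} > 0" using False by (intro gr0I) blast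
    then have "(1 - (\<Sum>a\<in>UNIV. p$a)) / real (card {a. p$a = 0}) > 0" using lt by simp
    then show ?thesis using False unfolding pic pic_pre_def Let_def by auto
  qed
next
  assume "(\<forall>lam. valid_rates (pf lam)) \<and> continuous_on UNIV pf
                   \<and> pic = (\<chi> a. 1 / real CARD('k))"
  then show ?thesis by simp
qed

lemma lim0: fixes c n :: real assumes "c > 0"
  shows "((\<lambda>m::nat. exp (- c * ((real m - n) / (2 * sqrt (real m)))))) \<longlonglongrightarrow> 0"
  using assms by real_asymp


theorem propositionC2:
  fixes M :: "'w measure"
    and A :: "nat \<Rightarrow> 'w \<Rightarrow> 'k::finite"
    and R :: "nat \<Rightarrow> 'w \<Rightarrow> real"
    and th th0 pic :: "real^'k"
    and pf ws :: "real^'k \<Rightarrow> real^'k"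
  assumes prob: "prob_space M"
    and theta: "th \<in> Theta"
    and rates: "(\<exists>p. valid_rates p \<and> ((\<Sum>a\<in>UNIV. p$a) < 1 \<or> (\<forall>a. p$a > 0))
                   \<and> pf = (\<lambda>_. p) \<and> pic = pic_pre p)
              \<or> ((\<forall>lam. valid_rates (pf lam)) \<and> continuous_on UNIV pf
                   \<and> pic = (\<chi> a. 1 / real CARD('k)))"
    and ws_feasible: "\<And>lam. ws lam \<in> Sigma_p (pf lam)"
    and ws_opt: "\<And>lam. lam \<in> Theta \<Longrightarrow> is_opt_alloc (pf lam) lam (ws lam)"
    and meas_A: "\<And>t. A t \<in> M \<rightarrow>\<^sub>M count_space UNIV"
    and meas_R: "\<And>t. R t \<in> borel_measurable M"
    and sampling: "\<And>t a. t \<ge> 1 \<Longrightarrow>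
          AE w in M. real_cond_exp M (hist M A R (t - 1))
                        (indicator {w \<in> space M. A t w = a}) w
                     = ftas_pi ws pic th0 A R t w $ a"
    and reward: "\<And>t B. t \<ge> 1 \<Longrightarrow> B \<in> sets borel \<Longrightarrow>
          AE w in M. real_cond_exp M (hist_act M A R t)
                        (indicator {w \<in> space M. R t w \<in> B}) w
                     = measure (density lborel (normal_density (th $ A t w) 1)) B"
  shows "\<forall>a. AE w in M. filterlim (\<lambda>t. Npulls A t w a) at_top sequentially"
proof
  fix a
  interpret prob_space M by (rule prob)
  define c where "c = pic $ a"
  have c_pos: "c > 0" unfolding c_def using pic_pos[OF rates] .
  have pi_lb: "eps t * c \<le> ftas_pi ws pic th0 A R t w $ a" if "1 \<le> t" for t w
  proof -
    have "0 \<le> ws (emp_mean th0 A R (t - 1) w) $ a"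
      using ws_feasible[of "emp_mean th0 A R (t - 1) w"] unfolding Sigma_p_def by simp
    moreover have "0 \<le> 1 - eps t" using eps_bounds[OF that] by simp
    ultimately show ?thesis unfolding ftas_pi_def c_def by simp
  qed
  have Aset: "{w \<in> space M. A t w = a} \<in> sets M" for t
  proof -
    have "{w \<in> space M. A t w = a} = A t -` {a} \<inter> space M" by auto
    then show ?thesis using measurable_sets[OF meas_A[of t], of "{a}"] by simp
  qed
  define E where "E n m = {w \<in> space M. \<forall>t. n < t \<and> t \<le> m \<longrightarrow> A t w \<noteq> a}" for n m :: nat
  have E_hist: "E n m \<in> sets (hist M A R m)" for n m
  proof -
    have "E n m = space (hist M A R m) - (\<Union>t\<in>{n<..m}. A t -` {a} \<inter> space M)"
      unfolding E_def space_hist by auto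
    also have "\<dots> \<in> sets (hist M A R m)"
      by (intro sets.Diff sets.top sets.finite_UN finite_greaterThanAtMost ballI hist_gen_in) auto
    finally show ?thesis .
  qed
  have E_M: "E n m \<in> sets M" for n m
  proof -
    have "sets (hist M A R m) \<subseteq> sets M"
      using hist_subalg[OF meas_A meas_R, where t=m] unfolding subalgebra_def by (rule conjunct2)
    then show ?thesis using E_hist[of n m] by (rule subsetD)
  qed
  have intE: "integrable M (indicator (E n m) :: _ \<Rightarrow> real)" for n m
    by (rule integrable_real_indicator[OF E_M]) (use emeasure_finite[of "E n m"] in \<open>simp add: less_top[symmetric]\<close>)
  have step_ineq: "measure M (E n (Suc m)) \<le> (1 - c * eps (Suc m)) * measure M (E n m)" if "n < Suc m" for n m
  proof -
    let ?F = "hist M A R m"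
    let ?G = "{w \<in> space M. A (Suc m) w = a}"
    have "sigma_finite_subalgebra M ?F"
      by (intro finite_measure_subalgebra_is_sigma_finite)
        (simp add: finite_measure_subalgebra_def finite_measure_subalgebra_axioms_def
          finite_measure_axioms hist_subalg[OF meas_A meas_R])
    then interpret S: sigma_finite_subalgebra M ?F .
    have ind_meas: "indicator (E n m) \<in> borel_measurable ?F"
      using E_hist by (intro borel_measurable_indicator)
    have int_EG: "integrable M (\<lambda>x. indicator (E n m) x * indicator ?G x :: real)"
    proof -
      have "(\<lambda>x. indicator (E n m) x * indicator ?G x :: real) = indicator (E n m \<inter> ?G)"
        by (auto simp: indicator_def)
      moreover have S: "E n m \<inter> ?G \<in> sets M" using E_M Aset by (rule sets.Int)
      moreover have "integrable M (indicator (E n m \<inter> ?G) :: _ \<Rightarrow> real)"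
        by (rule integrable_real_indicator[OF S]) (use emeasure_finite[of "E n m \<inter> ?G"] in \<open>simp add: less_top[symmetric]\<close>)
      ultimately show ?thesis by simp
    qed
    have I1: "integrable M (\<lambda>x. indicator (E n m) x * real_cond_exp M ?F (indicator ?G) x)"
      and I2: "(\<integral>x. indicator (E n m) x * real_cond_exp M ?F (indicator ?G) x \<partial>M)
            = (\<integral>x. indicator (E n m) x * indicator ?G x \<partial>M)"
      using S.real_cond_exp_intg[OF int_EG ind_meas] Aset by auto
    have I3: "(\<integral>x. indicator (E n m) x * indicator ?G x \<partial>M) = measure M (E n m \<inter> ?G)"
    proof -
      have "(\<lambda>x. indicator (E n m) x * indicator ?G x :: real) = indicator (E n m \<inter> ?G)"
        by (auto simp: indicator_def)
      then show ?thesis using E_M Aset by (simp add: Int_absorb2 sets.sets_into_space)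
    qed
    have AE1: "AE x in M. indicator (E n m) x * (c * eps (Suc m))
                 \<le> indicator (E n m) x * real_cond_exp M ?F (indicator ?G) x"
      using sampling[of "Suc m" a, simplified]
    proof eventually_elim
      case (elim x)
      then have "c * eps (Suc m) \<le> real_cond_exp M ?F (indicator ?G) x"
        using pi_lb[of "Suc m" x] by (simp add: mult.commute)
      then show ?case by (auto simp: indicator_def)
    qed
    have I4: "(\<integral>x. indicator (E n m) x * (c * eps (Suc m)) \<partial>M) = c * eps (Suc m) * measure M (E n m)"
      using E_M by (simp add: Int_absorb2 sets.sets_into_space)
    have "c * eps (Suc m) * measure M (E n m) \<le> measure M (E n m \<inter> ?G)"
    proof -
      have "(\<integral>x. indicator (E n m) x * (c * eps (Suc m)) \<partial>M)
             \<le> (\<integral>x. indicator (E n m) x * real_cond_exp M ?F (indicator ?G) x \<partial>M)"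
        by (rule integral_mono_AE[OF _ I1 AE1]) (use intE in simp)
      then show ?thesis using I2 I3 I4 by linarith
    qed
    moreover have "E n (Suc m) = E n m - ?G"
      unfolding E_def using that by (auto simp: le_Suc_eq)
    then have "measure M (E n (Suc m)) = measure M (E n m) - measure M (E n m \<inter> ?G)"
      using finite_measure_Diff'[OF E_M Aset] by simp
    ultimately show ?thesis by (simp add: algebra_simps)
  qed
  have bound: "measure M (E n m) \<le> exp (- c * (\<Sum>t\<in>{n<..m}. eps t))" if "n \<le> m" for n m
    using that
  proof (induction m rule: dec_induct)
    case base
    then show ?case by simp
  next
    case (step m)
    have "measure M (E n (Suc m)) \<le> (1 - c * eps (Suc m)) * measure M (E n m)"
      using step.hyps by (intro step_ineq) auto
    also have "\<dots> \<le> exp (- (c * eps (Suc m))) * measure M (E n m)"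
      using exp_ge_add_one_self[of "- (c * eps (Suc m))"] by (intro mult_right_mono) auto
    also have "\<dots> \<le> exp (- (c * eps (Suc m))) * exp (- c * (\<Sum>t\<in>{n<..m}. eps t))"
      using step.IH by (intro mult_left_mono) auto
    also have "\<dots> = exp (- c * (\<Sum>t\<in>{n<..Suc m}. eps t))"
    proof -
      have "{n<..Suc m} = insert (Suc m) {n<..m}" using step.hyps by auto
      then have "(\<Sum>t\<in>{n<..Suc m}. eps t) = eps (Suc m) + (\<Sum>t\<in>{n<..m}. eps t)" by simp
      then show ?thesis by (simp add: exp_add[symmetric] algebra_simps)
    qed
    finally show ?case .
  qed
  define F where "F n = space M - (\<Union>t\<in>{n<..}. A t -` {a} \<inter> space M)" for n :: nat
  have F_M: "F n \<in> sets M" for n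
  proof -
    have "(\<Union>t\<in>{n<..}. A t -` {a} \<inter> space M) \<in> sets M"
      using measurable_sets[OF meas_A] by (intro sets.countable_UN') auto
    then show ?thesis unfolding F_def by auto
  qed
  have F_null: "F n \<in> null_sets M" for n
  proof -
    have le: "measure M (F n) \<le> exp (- c * ((real m - real n) / (2 * sqrt (real m))))"
      if "n < m" for m
    proof -
      have "F n \<subseteq> E n m" unfolding F_def E_def by auto
      then have "measure M (F n) \<le> measure M (E n m)"
        using E_M by (intro finite_measure_mono) auto
      also have "\<dots> \<le> exp (- c * (\<Sum>t\<in>{n<..m}. eps t))" using bound that by simp
      also have "\<dots> \<le> exp (- c * ((real m - real n) / (2 * sqrt (real m))))"
      proof -
        have "(\<Sum>t\<in>{n<..m}. 1 / (2 * sqrt (real m))) \<le> (\<Sum>t\<in>{n<..m}. eps t)"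
          by (intro sum_mono eps_lb) auto
        moreover have "(\<Sum>t\<in>{n<..m}. 1 / (2 * sqrt (real m))) = (real m - real n) / (2 * sqrt (real m))"
          using that by (simp add: of_nat_diff)
        ultimately have "(real m - real n) / (2 * sqrt (real m)) \<le> (\<Sum>t\<in>{n<..m}. eps t)" by linarith
        then have "c * ((real m - real n) / (2 * sqrt (real m))) \<le> c * (\<Sum>t\<in>{n<..m}. eps t)"
          using c_pos by (intro mult_left_mono) auto
        then show ?thesis unfolding exp_le_cancel_iff mult_minus_left by linarith
      qed
      finally show ?thesis .
    qed
    have "measure M (F n) \<le> 0"
    proof (rule tendsto_le[OF trivial_limit_sequentially lim0[OF c_pos, of "real n"] tendsto_const])
      show "\<forall>\<^sub>F m in sequentially. measure M (F n) \<le> exp (- c * ((real m - real n) / (2 * sqrt (real m))))"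
        using eventually_gt_at_top[of n] by eventually_elim (rule le)
    qed
    then have "measure M (F n) = 0" by (simp add: order_antisym)
    then show ?thesis using F_M[of n] by (intro null_setsI) (simp_all add: emeasure_eq_measure)
  qed
  have incl: "{w \<in> space M. \<not> filterlim (\<lambda>t. Npulls A t w a) at_top sequentially} \<subseteq> (\<Union>n. F n)"
  proof
    fix w assume w: "w \<in> {w \<in> space M. \<not> filterlim (\<lambda>t. Npulls A t w a) at_top sequentially}"
    show "w \<in> (\<Union>n. F n)"
    proof (rule ccontr)
      assume "w \<notin> (\<Union>n. F n)"
      then have unb: "\<forall>n. \<exists>t>n. A t w = a" using w unfolding F_def by auto
      define S where "S = {s. 1 \<le> s \<and> A s w = a}"
      have "infinite S" unfolding infinite_nat_iff_unbounded S_def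
      proof
        fix m
        obtain t where "t > m" "A t w = a" using unb by blast
        then show "\<exists>n>m. n \<in> {s. 1 \<le> s \<and> A s w = a}" by auto
      qed
      have "filterlim (\<lambda>t. Npulls A t w a) at_top sequentially"
        unfolding filterlim_at_top
      proof
        fix Z :: nat
        obtain B where B: "finite B" "card B = Z" "B \<subseteq> S"
          using infinite_arbitrarily_large[OF \<open>infinite S\<close>] by blast
        show "\<forall>\<^sub>F t in sequentially. Z \<le> Npulls A t w a"
          unfolding eventually_sequentially
        proof (intro exI allI impI)
          fix t assume t: "Max B \<le> t"
          have "B \<subseteq> {s\<in>{1..t}. A s w = a}"
          proof
            fix s assume "s \<in> B"
            then have "s \<le> Max B" "s \<in> S" using B by auto
            then show "s \<in> {s\<in>{1..t}. A s w = a}" using t unfolding S_def by auto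
          qed
          then have "card B \<le> card {s\<in>{1..t}. A s w = a}" by (intro card_mono) auto
          then show "Z \<le> Npulls A t w a" unfolding Npulls_def using B(2) by simp
        qed
      qed
      then show False using w by simp
    qed
  qed
  show "AE w in M. filterlim (\<lambda>t. Npulls A t w a) at_top sequentially"
    by (rule AE_I'[OF _ incl]) (use F_null in auto)
qed
end
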